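(* For any $n\geq2$ there is a set $\Pi$ of permutations of $[n]=\{1,\dots,n\}$ with $|\Pi|\leq C^n$, where $C>0$ is a universal constant, having the following property. Let $p\in(0,1/2]$, $\delta\in(0,1/2]$, $s\in[-1,0]$, $\nu\in(0,1]$, $L\geq1$, and $x\in\mathrm{Incomp}_n(\delta,\nu)$. Then there is $\sigma\in\Pi$ such that the vector $\widetilde y=(\mathbf Y_{\sigma(i)}(p,x,L,s))_{i=1}^n$ satisfies $$|\widetilde y_i|>\frac{\nu}{\mathcal T_p(x,L)}-1\quad\text{for all } i\leq\delta n,$$ and $$|\widetilde y_i|\leq \frac{2^{(j+1)/2}}{\sqrt\delta\,\mathcal T_p(x,L)}+1\quad\text{for all } i>2^{-j}\delta n,\ \ 0\leq j\leq\log_2(\delta n).$$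
   Context: For $\delta,\nu\in(0,1]$, $\mathrm{Comp}_n(\delta,\nu)$ is the set of unit vectors $x\in\mathbb{R}^n$ for which there exists $y\in\mathbb{R}^n$ with at most $\delta n$ nonzero coordinates and $\|x-y\|_2\leq\nu$, and $\mathrm{Incomp}_n(\delta,\nu)=S^{n-1}\setminus\mathrm{Comp}_n(\delta,\nu)$. The Lévy concentration function is $\mathcal L(\xi,t)=\sup_{\lambda}\mathbb{P}\{|\xi-\lambda|\leq t\}$. For $p\in(0,1/2]$, $x\in S^{n-1}$, $L>0$, the threshold $\mathcal T_p(x,L)$ is the supremum of all $t\in(0,1]$ with $\mathcal L(\sum_i b_ix_i,t)>Lt$, where $b_1,\dots,b_n$ are independent Bernoulli($p$) variables (value $1$ with probability $p$, $0$ otherwise); it is positive. There are universal constants $C',c'>0$ such that for each $p\in(0,1/2]$, $s\in[-1,0]$, $x\in S^{n-1}$, $L\geq1$ one fixes a vector $\mathbf Y(p,x,L,s)\in\mathbb{Z}^n$ satisfying: $\|\frac{\sqrt n}{\mathcal T_p(x,L)}x-\mathbf Y(p,x,L,s)\|_\infty\leq1$; $\mathbb{P}\{|\sum_ib_i\mathbf Y_i(p,x,L,s)+\frac{s\sqrt n}{\mathcal T_p(x,L)}\sum_ix_i|\leq t\}\leq \frac{C'L\mathcal T_p(x,L)}{\sqrt n}t$ for all $t\geq\sqrt n$; $\mathcal L(\sum_ib_i\mathbf Y_i(p,x,L,s),\sqrt n)\geq c'L\mathcal T_p(x,L)$; and $|\frac{\sqrt n}{\mathcal T_p(x,L)}\sum_ix_i-\sum_i\mathbf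 Y_i(p,x,L,s)|\leq C'\sqrt n$ (such vectors exist). *)

theory Defs
  imports "HOL-Probability.Probability" "HOL-Combinatorics.Permutations"
begin

text \<open>Vectors in R^n are functions nat => real indexed by {1..n}, vanishing outside.\<close>

definition unit_sphere :: "nat \<Rightarrow> (nat \<Rightarrow> real) set" where
  "unit_sphere n = {x. (\<forall>i. i \<notin> {1..n} \<longrightarrow> x i = 0) \<and> (\<Sum>i=1..n. (x i)\<^sup>2) = 1}"

definition Comp :: "nat \<Rightarrow> real \<Rightarrow> real \<Rightarrow> (nat \<Rightarrow> real) set" where
  "Comp n \<delta> \<nu> = {x \<in> unit_sphere n. \<exists>y::nat \<Rightarrow> real.
      (\<forall>i. i \<notin> {1..n} \<longrightarrow> y i = 0) \<and>
      real (card {i\<in>{1..n}. y i \<noteq> 0}) \<le> \<delta> * real n \<and>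
      sqrt (\<Sum>i=1..n. (x i - y i)\<^sup>2) \<le> \<nu>}"

definition Incomp :: "nat \<Rightarrow> real \<Rightarrow> real \<Rightarrow> (nat \<Rightarrow> real) set" where
  "Incomp n \<delta> \<nu> = unit_sphere n - Comp n \<delta> \<nu>"

definition bern_vec :: "real \<Rightarrow> nat \<Rightarrow> (nat \<Rightarrow> bool) pmf" where
  "bern_vec p n = Pi_pmf {1..n} False (\<lambda>_. bernoulli_pmf p)"

definition levy_conc :: "'a pmf \<Rightarrow> ('a \<Rightarrow> real) \<Rightarrow> real \<Rightarrow> real" where
  "levy_conc M X t = (SUP c::real. measure_pmf.prob M {\<omega>. \<bar>X \<omega> - c\<bar> \<le> t})"

definition bsum :: "nat \<Rightarrow> (nat \<Rightarrow> bool) \<Rightarrow> (nat \<Rightarrow> real) \<Rightarrow> real" where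
  "bsum n b a = (\<Sum>i=1..n. (if b i then 1 else 0) * a i)"

definition threshold :: "nat \<Rightarrow> real \<Rightarrow> (nat \<Rightarrow> real) \<Rightarrow> real \<Rightarrow> real" where
  "threshold n p x L = Sup {t. 0 < t \<and> t \<le> 1 \<and>
      levy_conc (bern_vec p n) (\<lambda>b. bsum n b x) t > L * t}"

definition Y_good :: "real \<Rightarrow> real \<Rightarrow> nat \<Rightarrow>
    (real \<Rightarrow> (nat \<Rightarrow> real) \<Rightarrow> real \<Rightarrow> real \<Rightarrow> nat \<Rightarrow> int) \<Rightarrow> bool" where
  "Y_good C' c' n Y \<longleftrightarrow>
    (\<forall>p s x L. 0 < p \<and> p \<le> 1/2 \<and> -1 \<le> s \<and> s \<le> 0 \<and> x \<in> unit_sphere n \<and> 1 \<le> L \<longrightarrow>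
      (let T = threshold n p x L; Yv = (\<lambda>i. real_of_int (Y p x L s i)) in
        (\<forall>i\<in>{1..n}. \<bar>sqrt n / T * x i - Yv i\<bar> \<le> 1) \<and>
        (\<forall>t. sqrt n \<le> t \<longrightarrow>
           measure_pmf.prob (bern_vec p n)
             {b. \<bar>bsum n b Yv + s * sqrt n / T * (\<Sum>i=1..n. x i)\<bar> \<le> t}
           \<le> C' * L * T / sqrt n * t) \<and>
        levy_conc (bern_vec p n) (\<lambda>b. bsum n b Yv) (sqrt n) \<ge> c' * L * T \<and>
        \<bar>sqrt n / T * (\<Sum>i=1..n. x i) - (\<Sum>i=1..n. Yv i)\<bar> \<le> C' * sqrt n))"

end

theory Submission imports Defs begin

fun lvl :: "nat \<Rightarrow> nat" where
  "lvl i = (if i \<le> 1 then 0 else Suc (lvl (i div 2)))"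
declare lvl.simps[simp del]

lemma lvl_bounds: "1 \<le> i \<Longrightarrow> 2 ^ lvl i \<le> i \<and> i < 2 ^ (lvl i + 1)"
proof (induction i rule: lvl.induct)
  case (1 i)
  show ?case
  proof (cases "i \<le> 1")
    case True then show ?thesis using 1 by (simp add: lvl.simps[of i])
  next
    case False
    then have "2 ^ lvl (i div 2) \<le> i div 2 \<and> i div 2 < 2 ^ (lvl (i div 2) + 1)" using 1 by auto
    then show ?thesis using False by (auto simp: lvl.simps[of i])
  qed
qed

lemma lvl_mono: "i \<le> i' \<Longrightarrow> lvl i \<le> lvl i'"
proof (induction i arbitrary: i' rule: lvl.induct)
  case (1 i)
  show ?case
  proof (cases "i \<le> 1")
    case True then show ?thesis by (simp add: lvl.simps[of i])
  next
    case False
    then have "lvl (i div 2) \<le> lvl (i' div 2)" using 1 by (simp add: div_le_mono)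
    then show ?thesis using False 1(2) by (auto simp: lvl.simps[of i] lvl.simps[of i'])
  qed
qed

lemma sum_div2: "(\<Sum>v\<in>{0..<2*((L::nat)+1)}. g (v div 2)) = 2 * (\<Sum>l\<in>{0..<L+1}. (g l :: 'a::comm_semiring_1))"
proof (induction L)
  case 0
  have "{0..<2::nat} = {0,1}" by auto
  then show ?case by (simp add: mult_2)
next
  case (Suc L)
  have e: "{0..<2*(Suc L+1)} = {0..<2*(L+1)} \<union> {2*L+2, 2*L+3}" by auto
  have "(\<Sum>v\<in>{0..<2*(Suc L+1)}. g (v div 2)) = (\<Sum>v\<in>{0..<2*(L+1)}. g (v div 2)) + g (L+1) + g (L+1)"
    unfolding e by (subst sum.union_disjoint) (auto simp: add.assoc)
  moreover have "(\<Sum>l\<in>{0..<Suc L+1}. g l) = (\<Sum>l\<in>{0..<L+1}. g l) + g (L+1)" by simp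
  ultimately show ?case using Suc by (simp only: distrib_left mult_2 add_ac)
qed

lemma geo_weight: "(\<Sum>l\<in>{0..<L+1}. (2::nat)^l * (L - l)) + L + 2 = 2^(L+1)"
proof (induction L)
  case 0 then show ?case by simp
next
  case (Suc L)
  have "(\<Sum>l\<in>{0..<Suc L+1}. (2::nat)^l * (Suc L - l)) = (\<Sum>l\<in>{0..<L+1}. 2^l * (L - l)) + (\<Sum>l\<in>{0..<L+1}. 2^l)"
    by (simp add: sum.distrib[symmetric] algebra_simps Suc_diff_le)
  moreover have "(\<Sum>l\<in>{0..<L+1}. (2::nat)^l) + 1 = 2^(L+1)"
    by (induction L) auto
  ultimately show ?case using Suc by simp
qed

lemma geo_half: "(\<Sum>l\<in>{0..<L+1}. (1/2::real)^(L - l)) \<le> 2"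
proof -
  have "(\<Sum>l\<in>{0..<L+1}. (1/2::real)^(L - l)) = (\<Sum>l\<in>{0..<L+1}. (1/2::real)^l)"
    by (rule sum.reindex_bij_witness[of _ "\<lambda>l. L - l" "\<lambda>l. L - l"]) auto
  also have "\<dots> = 2 - 2 * (1/2)^(L+1)"
    by (induction L) auto
  finally show ?thesis by simp
qed


definition Gset :: "nat \<Rightarrow> nat \<Rightarrow> (nat \<Rightarrow> nat) set" where
  "Gset n L = {F \<in> PiE {1..n} (\<lambda>_. {0..<2*(L+1)}). \<forall>v. card {k\<in>{1..n}. F k = v} \<le> 2^(v div 2)}"

lemma Gset_card:
  assumes "2^L \<le> n"
  shows "real (card (Gset n L)) \<le> 64^n"
proof -
  define V where "V = {0..<2*(L+1)}"
  define w where "w v = (1/2::real)^(L - v div 2)" for v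
  have finP: "finite (PiE {1..n} (\<lambda>_. V))" by (simp add: V_def finite_PiE)
  have GP: "Gset n L \<subseteq> PiE {1..n} (\<lambda>_. V)" unfolding Gset_def V_def by auto
  have lowb: "(1/2::real)^(4*n) \<le> (\<Prod>k\<in>{1..n}. w (F k))" if F: "F \<in> Gset n L" for F
  proof -
    have FV: "F ` {1..n} \<subseteq> V" using F GP by (auto simp: PiE_def Pi_def)
    have cnt: "card {k\<in>{1..n}. F k = v} \<le> 2^(v div 2)" for v using F unfolding Gset_def by auto
    have "(\<Sum>k\<in>{1..n}. L - F k div 2) = (\<Sum>v\<in>V. \<Sum>k\<in>{k\<in>{1..n}. F k = v}. L - F k div 2)"
      by (rule sum.group[symmetric]) (use FV in \<open>auto simp: V_def\<close>)
    also have "\<dots> = (\<Sum>v\<in>V. card {k\<in>{1..n}. F k = v} * (L - v div 2))"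
      by (rule sum.cong) auto
    also have "\<dots> \<le> (\<Sum>v\<in>V. 2^(v div 2) * (L - v div 2))"
      by (rule sum_mono) (use cnt in auto)
    also have "\<dots> = 2 * (\<Sum>l\<in>{0..<L+1}. 2^l * (L - l))"
      unfolding V_def by (rule sum_div2)
    also have "\<dots> \<le> 2 * 2^(L+1)" using geo_weight[of L] by linarith
    also have "\<dots> \<le> 4 * n" using assms by simp
    finally have e: "(\<Sum>k\<in>{1..n}. L - F k div 2) \<le> 4 * n" .
    have "(\<Prod>k\<in>{1..n}. w (F k)) = (1/2::real)^(\<Sum>k\<in>{1..n}. L - F k div 2)"
      unfolding w_def by (simp add: power_sum)
    also have "\<dots> \<ge> (1/2)^(4*n)"
      by (rule power_decreasing[OF e]) auto
    finally show ?thesis .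
  qed
  have "real (card (Gset n L)) * (1/2)^(4*n) = (\<Sum>F\<in>Gset n L. (1/2::real)^(4*n))" by simp
  also have "\<dots> \<le> (\<Sum>F\<in>Gset n L. \<Prod>k\<in>{1..n}. w (F k))"
    by (rule sum_mono) (rule lowb)
  also have "\<dots> \<le> (\<Sum>F\<in>PiE {1..n} (\<lambda>_. V). \<Prod>k\<in>{1..n}. w (F k))"
    by (rule sum_mono2[OF finP GP]) (auto simp: w_def intro!: prod_nonneg)
  also have "\<dots> = (\<Prod>k\<in>{1..n}. \<Sum>v\<in>V. w v)"
    by (rule prod_sum_PiE[symmetric]) (auto simp: V_def)
  also have "\<dots> = (\<Sum>v\<in>V. w v)^n" by simp
  also have "\<dots> \<le> 4^n"
  proof (rule power_mono)
    have "(\<Sum>v\<in>V. w v) = 2 * (\<Sum>l\<in>{0..<L+1}. (1/2::real)^(L - l))"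
      unfolding V_def w_def by (rule sum_div2)
    then show "(\<Sum>v\<in>V. w v) \<le> 4" using geo_half[of L] by linarith
    show "0 \<le> (\<Sum>v\<in>V. w v)" by (auto simp: w_def intro!: sum_nonneg)
  qed
  finally have h: "real (card (Gset n L)) * (1/2)^(4*n) \<le> 4^n" .
  have "(2::real)^(4*n) * (1/2)^(4*n) = 1" by (simp add: power_mult_distrib[symmetric])
  then have "real (card (Gset n L)) = real (card (Gset n L)) * (1/2)^(4*n) * 2^(4*n)" by (simp add: algebra_simps)
  also have "\<dots> \<le> 4^n * 2^(4*n)" using h by (intro mult_right_mono) auto
  also have "\<dots> = 64^n" by (simp add: power_mult power_mult_distrib[symmetric])
  finally show ?thesis .
qed


definition Phi :: "nat \<Rightarrow> (nat \<Rightarrow> nat) \<Rightarrow> nat \<Rightarrow> nat" where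
  "Phi n F i = (if i \<in> {1..n} then sort_key F [1..<n+1] ! (i - 1) else i)"

lemma Phi_permutes: "Phi n F permutes {1..n}"
proof (rule bij_imp_permutes)
  define zs where "zs = sort_key F [1..<n+1]"
  have d: "distinct zs" and s: "set zs = {1..n}" and l: "length zs = n"
    by (auto simp: zs_def length_sort)
  have "bij_betw (\<lambda>i. zs ! (i - 1)) {1..n} {1..n}"
  proof (rule bij_betw_imageI)
    show "inj_on (\<lambda>i. zs ! (i - 1)) {1..n}"
    proof (rule inj_onI)
      fix i i' assume "i \<in> {1..n}" "i' \<in> {1..n}" "zs ! (i - 1) = zs ! (i' - 1)"
      moreover have "i - 1 < length zs" "i' - 1 < length zs" using l \<open>i \<in> {1..n}\<close> \<open>i' \<in> {1..n}\<close> by auto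
      ultimately have "i - 1 = i' - 1" using nth_eq_iff_index_eq[OF d] by blast
      then show "i = i'" using \<open>i \<in> {1..n}\<close> \<open>i' \<in> {1..n}\<close> by auto
    qed
    show "(\<lambda>i. zs ! (i - 1)) ` {1..n} = {1..n}"
    proof
      show "(\<lambda>i. zs ! (i - 1)) ` {1..n} \<subseteq> {1..n}"
      proof (rule image_subsetI)
        fix i assume "i \<in> {1..n}"
        then have "zs ! (i - 1) \<in> set zs" using l by (intro nth_mem) auto
        then show "zs ! (i - 1) \<in> {1..n}" using s by simp
      qed
      show "{1..n} \<subseteq> (\<lambda>i. zs ! (i - 1)) ` {1..n}"
      proof
        fix k assume "k \<in> {1..n}"
        then obtain p where p: "p < n" "zs ! p = k" using s l by (metis in_set_conv_nth)
        then show "k \<in> (\<lambda>i. zs ! (i - 1)) ` {1..n}" by (intro image_eqI[of _ _ "p+1"]) auto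
      qed
    qed
  qed
  moreover have "bij_betw (Phi n F) {1..n} {1..n} = bij_betw (\<lambda>i. zs ! (i - 1)) {1..n} {1..n}"
    by (rule bij_betw_cong) (simp add: Phi_def zs_def)
  ultimately show "bij_betw (Phi n F) {1..n} {1..n}" by simp
  show "Phi n F x = x" if "x \<notin> {1..n}" for x using that unfolding Phi_def by (simp only: if_False)
qed

lemma incomp_top:
  assumes x: "x \<in> Incomp n \<delta> \<nu>"
    and ys: "distinct ys" "set ys = {1..n}" "length ys = n"
    and srt: "\<And>q q'. q \<le> q' \<Longrightarrow> q' < n \<Longrightarrow> \<bar>x (ys ! q')\<bar> \<le> \<bar>x (ys ! q)\<bar>"
    and q: "q < n" "real q \<le> \<delta> * real n"
    and nu: "0 < \<nu>"
  shows "\<nu> / sqrt n < \<bar>x (ys ! q)\<bar>"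
proof (rule ccontr)
  assume "\<not> ?thesis"
  then have small: "\<bar>x (ys ! q)\<bar> \<le> \<nu> / sqrt n" by simp
  have xs: "x \<in> unit_sphere n" and nc: "x \<notin> Comp n \<delta> \<nu>" using x by (auto simp: Incomp_def)
  have n0: "n > 0" using q by simp
  define S where "S = (\<lambda>q'. ys ! q') ` {..<q}"
  define y where "y k = (if k \<in> S then x k else 0)" for k
  have Ssub: "S \<subseteq> {1..n}" unfolding S_def using ys q by (auto simp flip: ys(2) intro!: nth_mem)
  have y0: "\<forall>i. i \<notin> {1..n} \<longrightarrow> y i = 0" using Ssub by (auto simp: y_def)
  have "card {i\<in>{1..n}. y i \<noteq> 0} \<le> card S"
    by (rule card_mono) (auto simp: S_def y_def split: if_splits)
  also have "card S \<le> q" unfolding S_def using card_image_le[of "{..<q}"] by simp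
  finally have c: "real (card {i\<in>{1..n}. y i \<noteq> 0}) \<le> \<delta> * real n" using q by linarith
  have tm: "(x k - y k)^2 \<le> \<nu>^2 / n" if k: "k \<in> {1..n}" for k
  proof (cases "k \<in> S")
    case True then show ?thesis by (simp add: y_def)
  next
    case False
    obtain q' where q': "q' < n" "ys ! q' = k" using k ys by (metis in_set_conv_nth)
    have "q \<le> q'" using False q' unfolding S_def by (metis image_eqI lessThan_iff not_le)
    then have "\<bar>x k\<bar> \<le> \<nu> / sqrt n" using srt[of q q'] q' small by auto
    then have "\<bar>x k\<bar>^2 \<le> (\<nu> / sqrt n)^2" by (intro power_mono) auto
    then show ?thesis using False n0 by (simp add: y_def power_divide)
  qed
  have "(\<Sum>i=1..n. (x i - y i)^2) \<le> (\<Sum>i=1..n. \<nu>^2 / n)" by (rule sum_mono) (rule tm)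
  also have "\<dots> = \<nu>^2" using n0 by simp
  finally have "sqrt (\<Sum>i=1..n. (x i - y i)^2) \<le> sqrt (\<nu>^2)" by (rule real_sqrt_le_mono)
  then have "sqrt (\<Sum>i=1..n. (x i - y i)^2) \<le> \<nu>" using nu by simp
  then have "x \<in> Comp n \<delta> \<nu>" using xs y0 c unfolding Comp_def by blast
  then show False using nc by simp
qed


lemma key_mono:
  fixes m :: nat
  defines "key \<equiv> \<lambda>p. 2 * lvl (p+1) + (if p < m then 0 else 1)"
  assumes "p \<le> p'"
  shows "key p \<le> key p'"
proof -
  have "lvl (p+1) \<le> lvl (p'+1)" using assms by (intro lvl_mono) simp
  then show ?thesis unfolding key_def using assms by auto
qed

lemma construct:
  assumes x: "x \<in> Incomp n \<delta> \<nu>" and nu: "0 < \<nu>" and dl: "0 < \<delta>"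
  shows "\<exists>F\<in>Gset n (lvl n).
     (\<forall>i\<in>{1..n}. real i \<le> \<delta> * real n \<longrightarrow> \<nu> / sqrt n < \<bar>x (Phi n F i)\<bar>) \<and>
     (\<forall>i\<in>{1..n}. (x (Phi n F i))^2 * real i \<le> 2)"
proof -
  define a where "a k = \<bar>x k\<bar>" for k
  define ys where "ys = sort_key (\<lambda>k. - a k) [1..<n+1]"
  have ysd: "distinct ys" and yss: "set ys = {1..n}" and ysl: "length ys = n"
    by (auto simp: ys_def length_sort)
  have srt: "a (ys ! q') \<le> a (ys ! q)" if "q \<le> q'" "q' < n" for q q'
  proof -
    have "sorted (map (\<lambda>k. - a k) ys)" unfolding ys_def by simp
    then have "(map (\<lambda>k. - a k) ys) ! q \<le> (map (\<lambda>k. - a k) ys) ! q'"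
      using that ysl by (intro sorted_nth_mono) auto
    then show ?thesis using that ysl by simp
  qed
  define idx where "idx k = (THE q. q < n \<and> ys ! q = k)" for k
  have idx_nth: "idx (ys ! q) = q" if "q < n" for q
    unfolding idx_def
  proof (rule the_equality)
    show "q < n \<and> ys ! q = ys ! q" using that by simp
    fix q' assume "q' < n \<and> ys ! q' = ys ! q"
    then show "q' = q" using nth_eq_iff_index_eq[OF ysd, of q' q] that ysl by simp
  qed
  have idx_in: "idx k < n \<and> ys ! idx k = k" if "k \<in> {1..n}" for k
  proof -
    have "k \<in> set ys" using that yss by simp
    then obtain q where q: "q < n" "ys ! q = k" using ysl by (auto simp: in_set_conv_nth)
    have "idx k = q" using idx_nth[OF q(1)] q(2) by simp
    then show ?thesis using q by simp
  qed
  define m where "m = nat \<lfloor>\<delta> * real n\<rfloor>"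
  define key where "key p = 2 * lvl (p+1) + (if p < m then 0 else 1)" for p
  have keym: "key p \<le> key p'" if "p \<le> p'" for p p'
    using key_mono[OF that, of m] unfolding key_def by simp
  have keyeq: "lvl (p+1) = lvl (p'+1) \<and> (p < m \<longleftrightarrow> p' < m)" if "key p = key p'" for p p'
    using that unfolding key_def by (auto split: if_splits) presburger+
  define F where "F k = (if k \<in> {1..n} then key (idx k) else undefined)" for k
  define zs where "zs = sort_key F [1..<n+1]"
  have zsl: "length zs = n" by (simp add: zs_def length_sort)
  have mapFys: "map F ys = map key [0..<n]"
  proof (rule nth_equalityI)
    show "length (map F ys) = length (map key [0..<n])" using ysl by simp
    fix q assume "q < length (map F ys)"
    then have q: "q < n" using ysl by simp
    then have "ys ! q \<in> {1..n}" using yss ysl by (metis nth_mem)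
    then show "map F ys ! q = map key [0..<n] ! q" using q ysl idx_nth[OF q] by (simp add: F_def)
  qed
  have "mset (map F zs) = mset (map key [0..<n])"
  proof -
    have "mset zs = mset [1..<n+1]" by (simp add: zs_def)
    also have "\<dots> = mset ys" by (simp add: ys_def)
    finally have "mset (map F zs) = mset (map F ys)" by simp
    then show ?thesis using mapFys by simp
  qed
  moreover have "sorted (map key [0..<n])"
    by (auto simp: sorted_iff_nth_mono intro!: keym)
  moreover have "sorted (map F zs)" by (simp add: zs_def)
  ultimately have "sort (map key [0..<n]) = map F zs" "sort (map key [0..<n]) = map key [0..<n]"
    by (auto intro: properties_for_sort)
  then have mz: "map F zs = map key [0..<n]" by simp
  have Fzs: "F (zs ! p) = key p" if "p < n" for p
  proof -
    have "map F zs ! p = map key [0..<n] ! p" using mz by simp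
    then show ?thesis using that zsl by simp
  qed
  have Phi_eq: "Phi n F i = zs ! (i - 1)" if "i \<in> {1..n}" for i
    using that by (simp add: Phi_def zs_def)
  have zsin: "zs ! p \<in> {1..n}" if "p < n" for p
  proof -
    have "set zs = set [1..<n+1]" by (simp add: zs_def)
    also have "\<dots> = {1..n}" by auto
    finally have "set zs = {1..n}" .
    moreover have "zs ! p \<in> set zs" using that zsl by (intro nth_mem) simp
    ultimately show ?thesis by simp
  qed
  have pos: "\<exists>q<n. ys ! q = Phi n F i \<and> lvl (q+1) = lvl i \<and> (q < m \<longleftrightarrow> i - 1 < m)" if i: "i \<in> {1..n}" for i
  proof -
    define e where "e = zs ! (i - 1)"
    have "i - 1 < n" using i by auto
    then have ein: "e \<in> {1..n}" using zsin[of "i-1"] by (simp add: e_def)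
    define q where "q = idx e"
    have q: "q < n" "ys ! q = e" using idx_in[OF ein] by (simp_all add: q_def)
    have "key q = key (i - 1)" using Fzs[OF \<open>i - 1 < n\<close>] ein by (simp add: F_def e_def q_def)
    then have "lvl (q+1) = lvl (i - 1 + 1) \<and> (q < m \<longleftrightarrow> i - 1 < m)" by (rule keyeq)
    then show ?thesis using q i Phi_eq[OF i] by (auto simp: e_def)
  qed
  have FG: "F \<in> Gset n (lvl n)"
    unfolding Gset_def
  proof (intro CollectI conjI allI)
    show "F \<in> PiE {1..n} (\<lambda>_. {0..<2*(lvl n+1)})"
    proof (rule PiE_I)
      fix k assume k: "k \<in> {1..n}"
      have "lvl (idx k + 1) \<le> lvl n" using idx_in[OF k] by (intro lvl_mono) simp
      then show "F k \<in> {0..<2*(lvl n+1)}" using k by (auto simp: F_def key_def)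
    next
      fix k assume "k \<notin> {1..n}" then show "F k = undefined" unfolding F_def by (rule if_not_P)
    qed
    fix v :: nat
    define l where "l = v div 2"
    have "{k\<in>{1..n}. F k = v} \<subseteq> (\<lambda>q. ys ! q) ` {q. q < n \<and> key q = v}"
    proof
      fix k assume "k \<in> {k\<in>{1..n}. F k = v}"
      then have k: "k \<in> {1..n}" "key (idx k) = v" by (auto simp: F_def)
      then show "k \<in> (\<lambda>q. ys ! q) ` {q. q < n \<and> key q = v}"
        using idx_in[OF k(1)] by (intro image_eqI[of _ _ "idx k"]) auto
    qed
    then have "card {k\<in>{1..n}. F k = v} \<le> card ((\<lambda>q. ys ! q) ` {q. q < n \<and> key q = v})"
      by (intro card_mono) auto
    also have "\<dots> \<le> card {q. q < n \<and> key q = v}" by (rule card_image_le) simp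
    also have "\<dots> \<le> card {(2::nat)^l - 1..<2^(l+1) - 1}"
    proof (rule card_mono)
      show "{q. q < n \<and> key q = v} \<subseteq> {(2::nat)^l - 1..<2^(l+1) - 1}"
      proof
        fix q assume "q \<in> {q. q < n \<and> key q = v}"
        then have "lvl (q+1) = l" by (auto simp: key_def l_def)
        moreover have "2 ^ lvl (q+1) \<le> q + 1 \<and> q + 1 < 2 ^ (lvl (q+1) + 1)" by (rule lvl_bounds) simp
        ultimately show "q \<in> {(2::nat)^l - 1..<2^(l+1) - 1}" by auto
      qed
    qed simp
    also have "\<dots> = 2^l" by simp
    finally show "card {k\<in>{1..n}. F k = v} \<le> 2^(v div 2)" by (simp add: l_def)
  qed
  have P1: "\<nu> / sqrt n < \<bar>x (Phi n F i)\<bar>" if i: "i \<in> {1..n}" "real i \<le> \<delta> * real n" for i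
  proof -
    obtain q where q: "q < n" "ys ! q = Phi n F i" "q < m \<longleftrightarrow> i - 1 < m" using pos[OF i(1)] by blast
    have "int i \<le> \<lfloor>\<delta> * real n\<rfloor>" using i(2) by (simp add: le_floor_iff)
    then have "i \<le> m" unfolding m_def by linarith
    then have "q < m" using q i by auto
    then have "real q \<le> \<delta> * real n" unfolding m_def by linarith
    then have "\<nu> / sqrt n < \<bar>x (ys ! q)\<bar>"
      by (intro incomp_top[OF x ysd yss ysl _ q(1) _ nu]) (use srt in \<open>auto simp: a_def\<close>)
    then show ?thesis using q by simp
  qed
  have x1: "(\<Sum>k=1..n. (x k)^2) = 1" using x by (auto simp: Incomp_def unit_sphere_def)
  have sumys: "(\<Sum>q<n. (x (ys ! q))^2) = 1"
  proof -
    have "(\<Sum>q<n. (x (ys ! q))^2) = (\<Sum>k\<in>(\<lambda>q. ys ! q) ` {..<n}. (x k)^2)"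
      by (rule sum.reindex[symmetric, unfolded comp_def]) (use ysd ysl in \<open>auto intro: inj_on_nth\<close>)
    also have "(\<lambda>q. ys ! q) ` {..<n} = {1..n}"
    proof -
      have "set ys = (\<lambda>q. ys ! q) ` {..<length ys}" by (auto simp: set_conv_nth)
      then show ?thesis using yss ysl by simp
    qed
    finally show ?thesis using x1 by simp
  qed
  have P2: "(x (Phi n F i))^2 * real i \<le> 2" if i: "i \<in> {1..n}" for i
  proof -
    obtain q where q: "q < n" "ys ! q = Phi n F i" "lvl (q+1) = lvl i" using pos[OF i] by blast
    define e where "e = Phi n F i"
    have "(\<Sum>q'\<in>{..q}. (x e)^2) \<le> (\<Sum>q'\<in>{..q}. (x (ys ! q'))^2)"
    proof (rule sum_mono)
      fix q' assume "q' \<in> {..q}"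
      then have "a (ys ! q) \<le> a (ys ! q')" using srt[of q' q] q by auto
      then have "\<bar>x e\<bar>^2 \<le> \<bar>x (ys ! q')\<bar>^2" using q by (intro power_mono) (auto simp: a_def e_def)
      then show "(x e)^2 \<le> (x (ys ! q'))^2" by simp
    qed
    also have "\<dots> \<le> (\<Sum>q<n. (x (ys ! q))^2)" using q by (intro sum_mono2) auto
    finally have h: "real (q+1) * (x e)^2 \<le> 1" using sumys by simp
    have "i < 2 ^ (lvl i + 1)" using lvl_bounds[of i] i by simp
    also have "\<dots> = 2 * 2 ^ lvl (q+1)" using q by simp
    also have "\<dots> \<le> 2 * (q+1)" using lvl_bounds[of "q+1"] by simp
    finally have "real i \<le> 2 * real (q+1)" by linarith
    then have "(x e)^2 * real i \<le> (x e)^2 * (2 * real (q+1))" by (intro mult_left_mono) auto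
    also have "\<dots> \<le> 2" using h by (simp add: algebra_simps)
    finally show ?thesis by (simp add: e_def)
  qed
  show ?thesis using FG P1 P2 by blast
qed


lemma upper_arith:
  fixes T \<delta> N X i :: real and j :: nat
  assumes T: "T > 0" and d: "\<delta> > 0" and N: "N > 0" and h: "X^2 * i \<le> 2"
    and ij: "2 powr (- real j) * \<delta> * N < i"
  shows "sqrt N / T * \<bar>X\<bar> \<le> 2 powr ((real j + 1) / 2) / (sqrt \<delta> * T)"
proof -
  have e: "2 powr (- real j) * 2^j = 1" by (simp add: powr_minus powr_realpow)
  have "(2 powr (- real j) * \<delta> * N) * 2^j = (2 powr (- real j) * 2^j) * (\<delta> * N)" by (simp only: ac_simps)
  also have "\<dots> = \<delta> * N" using e by simp
  finally have "\<delta> * N = (2 powr (- real j) * \<delta> * N) * 2^j" by simp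
  also have "\<dots> < i * 2^j" using ij by (intro mult_strict_right_mono) auto
  finally have "\<delta> * N < 2^j * i" by (simp add: mult.commute)
  then have "X^2 * (\<delta> * N) \<le> X^2 * (2^j * i)" by (intro mult_left_mono) auto
  also have "\<dots> = 2^j * (X^2 * i)" by simp
  also have "\<dots> \<le> 2^j * 2" using h by (intro mult_left_mono) auto
  finally have k: "N * X^2 * \<delta> \<le> 2^(j+1)" by (simp add: algebra_simps)
  have "sqrt N * \<bar>X\<bar> * sqrt \<delta> = sqrt (N * X^2 * \<delta>)" by (simp add: real_sqrt_mult)
  also have "\<dots> \<le> sqrt (2^(j+1))" using k by (rule real_sqrt_le_mono)
  also have "\<dots> = (2 powr (real j + 1)) powr (1/2)"
  proof -
    have "2 powr (real j + 1) = 2^(j+1)" using powr_realpow[of 2 "j+1"] by (simp add: add.commute)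
    then show ?thesis by (simp add: powr_half_sqrt)
  qed
  also have "\<dots> = 2 powr ((real j + 1) / 2)" by (simp add: powr_powr)
  finally have m: "sqrt N * \<bar>X\<bar> * sqrt \<delta> \<le> 2 powr ((real j + 1) / 2)" .
  have "sqrt N / T * \<bar>X\<bar> = (sqrt N * \<bar>X\<bar> * sqrt \<delta>) / (sqrt \<delta> * T)" using d T by (simp add: field_simps)
  also have "\<dots> \<le> 2 powr ((real j + 1) / 2) / (sqrt \<delta> * T)"
    using m d T by (intro divide_right_mono) auto
  finally show ?thesis .
qed

theorem lemma5p3:
  fixes C' c' :: real
  assumes "C' > 0" and "c' > 0"
  shows "\<exists>C>0. \<forall>n::nat. n \<ge> 2 \<longrightarrow>
    (\<forall>Y. Y_good C' c' n Y \<longrightarrow>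
      (\<exists>Perms. (\<forall>\<sigma>\<in>Perms. \<sigma> permutes {1..n}) \<and> real (card Perms) \<le> C ^ n \<and>
        (\<forall>p \<delta> s \<nu> L x.
           0 < p \<and> p \<le> 1/2 \<and> 0 < \<delta> \<and> \<delta> \<le> 1/2 \<and> -1 \<le> s \<and> s \<le> 0 \<and>
           0 < \<nu> \<and> \<nu> \<le> 1 \<and> 1 \<le> L \<and> x \<in> Incomp n \<delta> \<nu> \<longrightarrow>
           (\<exists>\<sigma>\<in>Perms.
              (\<forall>i\<in>{1..n}. real i \<le> \<delta> * real n \<longrightarrow>
                 \<bar>real_of_int (Y p x L s (\<sigma> i))\<bar> > \<nu> / threshold n p x L - 1) \<and>
              (\<forall>j::nat. real j \<le> log 2 (\<delta> * real n) \<longrightarrow>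
                 (\<forall>i\<in>{1..n}. real i > 2 powr (- real j) * \<delta> * real n \<longrightarrow>
                   \<bar>real_of_int (Y p x L s (\<sigma> i))\<bar>
                     \<le> 2 powr ((real j + 1) / 2) / (sqrt \<delta> * threshold n p x L) + 1))))))"
proof (intro exI[of _ "64::real"] conjI allI impI)
  show "(0::real) < 64" by simp
  fix n :: nat and Y
  assume n2: "n \<ge> 2" and Yg: "Y_good C' c' n Y"
  define Perms where "Perms = Phi n ` Gset n (lvl n)"
  have finG: "finite (Gset n (lvl n))"
    by (rule finite_subset[of _ "PiE {1..n} (\<lambda>_. {0..<2*(lvl n+1)})"]) (auto simp: Gset_def finite_PiE)
  have "2 ^ lvl n \<le> n" using lvl_bounds[of n] n2 by simp
  then have cG: "real (card (Gset n (lvl n))) \<le> 64^n" by (rule Gset_card)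
  have "card Perms \<le> card (Gset n (lvl n))" unfolding Perms_def by (rule card_image_le[OF finG])
  then have cP: "real (card Perms) \<le> 64^n" using cG by linarith
  have pP: "\<forall>\<sigma>\<in>Perms. \<sigma> permutes {1..n}" unfolding Perms_def using Phi_permutes by blast
  have main: "\<exists>\<sigma>\<in>Perms.
              (\<forall>i\<in>{1..n}. real i \<le> \<delta> * real n \<longrightarrow>
                 \<bar>real_of_int (Y p x L s (\<sigma> i))\<bar> > \<nu> / threshold n p x L - 1) \<and>
              (\<forall>j::nat. real j \<le> log 2 (\<delta> * real n) \<longrightarrow>
                 (\<forall>i\<in>{1..n}. real i > 2 powr (- real j) * \<delta> * real n \<longrightarrow>
                   \<bar>real_of_int (Y p x L s (\<sigma> i))\<bar>
                     \<le> 2 powr ((real j + 1) / 2) / (sqrt \<delta> * threshold n p x L) + 1))"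
    if H: "0 < p \<and> p \<le> 1/2 \<and> 0 < \<delta> \<and> \<delta> \<le> 1/2 \<and> -1 \<le> s \<and> s \<le> 0 \<and>
           0 < \<nu> \<and> \<nu> \<le> 1 \<and> 1 \<le> L \<and> x \<in> Incomp n \<delta> \<nu>" for p \<delta> s \<nu> L x
  proof -
    have xI: "x \<in> Incomp n \<delta> \<nu>" and nu: "0 < \<nu>" and dl: "0 < \<delta>" and L1: "1 \<le> L" using H by auto
    have xs: "x \<in> unit_sphere n" using xI by (simp add: Incomp_def)
    obtain F where F: "F \<in> Gset n (lvl n)"
      and P1: "\<forall>i\<in>{1..n}. real i \<le> \<delta> * real n \<longrightarrow> \<nu> / sqrt n < \<bar>x (Phi n F i)\<bar>"
      and P2: "\<forall>i\<in>{1..n}. (x (Phi n F i))^2 * real i \<le> 2"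
      using construct[OF xI nu dl] by blast
    define T where "T = threshold n p x L"
    define Yv where "Yv = (\<lambda>i. real_of_int (Y p x L s i))"
    have Yp: "(\<forall>i\<in>{1..n}. \<bar>sqrt n / T * x i - Yv i\<bar> \<le> 1) \<and>
        (\<forall>t. sqrt n \<le> t \<longrightarrow>
           measure_pmf.prob (bern_vec p n)
             {b. \<bar>bsum n b Yv + s * sqrt n / T * (\<Sum>i=1..n. x i)\<bar> \<le> t}
           \<le> C' * L * T / sqrt n * t)"
      using Yg H xs unfolding Y_good_def T_def Yv_def Let_def by blast
    have sn: "sqrt (real n) > 0" using n2 by simp
    have "0 \<le> C' * L * T / sqrt n * sqrt n"
      using Yp[THEN conjunct2, rule_format, of "sqrt n"] measure_nonneg order_trans by blast
    then have "0 \<le> C' * L * T" using sn by simp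
    have CL: "C' * L > 0" using assms L1 by simp
    have T0: "T \<ge> 0"
    proof (rule ccontr)
      assume "\<not> T \<ge> 0"
      then have "C' * L * T < 0" using CL by (intro mult_pos_neg) auto
      then show False using \<open>0 \<le> C' * L * T\<close> by simp
    qed
    have Yclose: "\<bar>sqrt n / T * x k - Yv k\<bar> \<le> 1" if "k \<in> {1..n}" for k
      using Yp that by blast
    let ?\<sigma> = "Phi n F"
    have sin: "?\<sigma> i \<in> {1..n}" if "i \<in> {1..n}" for i
      using that by (simp only: permutes_in_image[OF Phi_permutes])
    have C1: "\<bar>Yv (?\<sigma> i)\<bar> > \<nu> / T - 1" if i: "i \<in> {1..n}" "real i \<le> \<delta> * real n" for i
    proof (cases "T = 0")
      case True then show ?thesis by simp
    next
      case False
      then have Tp: "T > 0" using T0 by simp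
      have a: "\<nu> / sqrt n < \<bar>x (?\<sigma> i)\<bar>" using P1 i by blast
      have "\<nu> / T = sqrt n / T * (\<nu> / sqrt n)" using sn by (simp add: field_simps)
      also have "\<dots> < sqrt n / T * \<bar>x (?\<sigma> i)\<bar>" using a sn Tp by (intro mult_strict_left_mono) auto
      also have "\<dots> = \<bar>sqrt n / T * x (?\<sigma> i)\<bar>" using sn Tp by (simp add: abs_mult)
      finally show ?thesis using Yclose[OF sin[OF i(1)]] by linarith
    qed
    have C2: "\<bar>Yv (?\<sigma> i)\<bar> \<le> 2 powr ((real j + 1) / 2) / (sqrt \<delta> * T) + 1"
      if i: "i \<in> {1..n}" "2 powr (- real j) * \<delta> * real n < real i" for i j
    proof (cases "T = 0")
      case True then show ?thesis using Yclose[OF sin[OF i(1)]] by simp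
    next
      case False
      then have Tp: "T > 0" using T0 by simp
      have "sqrt n / T * \<bar>x (?\<sigma> i)\<bar> \<le> 2 powr ((real j + 1) / 2) / (sqrt \<delta> * T)"
        using P2 i by (intro upper_arith[OF Tp dl]) (use n2 in auto)
      moreover have "\<bar>sqrt n / T * x (?\<sigma> i)\<bar> = sqrt n / T * \<bar>x (?\<sigma> i)\<bar>" using sn Tp by (simp add: abs_mult)
      ultimately show ?thesis using Yclose[OF sin[OF i(1)]] by linarith
    qed
    show ?thesis
      using C1 C2 F unfolding Perms_def Yv_def T_def by blast
  qed
  show "\<exists>Perms. (\<forall>\<sigma>\<in>Perms. \<sigma> permutes {1..n}) \<and> real (card Perms) \<le> 64 ^ n \<and>
        (\<forall>p \<delta> s \<nu> L x.
           0 < p \<and> p \<le> 1/2 \<and> 0 < \<delta> \<and> \<delta> \<le> 1/2 \<and> -1 \<le> s \<and> s \<le> 0 \<and>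
           0 < \<nu> \<and> \<nu> \<le> 1 \<and> 1 \<le> L \<and> x \<in> Incomp n \<delta> \<nu> \<longrightarrow>
           (\<exists>\<sigma>\<in>Perms.
              (\<forall>i\<in>{1..n}. real i \<le> \<delta> * real n \<longrightarrow>
                 \<bar>real_of_int (Y p x L s (\<sigma> i))\<bar> > \<nu> / threshold n p x L - 1) \<and>
              (\<forall>j::nat. real j \<le> log 2 (\<delta> * real n) \<longrightarrow>
                 (\<forall>i\<in>{1..n}. real i > 2 powr (- real j) * \<delta> * real n \<longrightarrow>
                   \<bar>real_of_int (Y p x L s (\<sigma> i))\<bar>
                     \<le> 2 powr ((real j + 1) / 2) / (sqrt \<delta> * threshold n p x L) + 1))))"
    using pP cP main by blast
qed

end
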